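(* Let $n,p\in\mathbb{N}$, $0\le\lambda\le1$. Let $f$ be analytic in $\mathrm{U}=\{|z|<1\}$ of the form $f(z)=z^p+\sum_{k=p+n}^\infty a_kz^k$, put $\mathcal{F}_\lambda(z)=(1-\lambda)f(z)+\lambda zf'(z)$, and assume $\mathcal{F}_\lambda(z)\mathcal{F}_\lambda'(z)\neq0$ for all $z\in\mathrm{U}\setminus\{0\}$. Let $\delta\in[0,1/p)$ and $$\varsigma_1=\begin{cases} -\dfrac{n\delta p}{2(1-\delta p)}, & \delta\in[0,\tfrac{1}{2p}],\\[2mm] -\dfrac{n(1-\delta p)}{2\delta p}, & \delta\in[\tfrac{1}{2p},\tfrac1p).\end{cases}$$ If $$\operatorname{Re}\left[\frac{z\mathcal{F}_\lambda'(z)}{\mathcal{F}_\lambda(z)}-1-\frac{z\mathcal{F}_\lambda''(z)}{\mathcal{F}_\lambda'(z)}\right]>\varsigma_1,\quad z\in\mathrm{U},$$ then $\operatorname{Re}\dfrac{\mathcal{F}_\lambda(z)}{z\mathcal{F}_\lambda'(z)}>\delta$ for all $z\in\mathrm{U}$. *)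

theory Defs
  imports "HOL-Complex_Analysis.Complex_Analysis"
begin

definition unit_disc :: "complex set" where
  "unit_disc = ball 0 1"

definition of_form :: "nat \<Rightarrow> nat \<Rightarrow> (complex \<Rightarrow> complex) \<Rightarrow> bool" where
  "of_form p n f \<longleftrightarrow> f holomorphic_on unit_disc \<and>
     (\<exists>a :: nat \<Rightarrow> complex. a p = 1 \<and> (\<forall>k. k < p + n \<and> k \<noteq> p \<longrightarrow> a k = 0) \<and>
        (\<forall>z\<in>unit_disc. (\<lambda>k. a k * z ^ k) sums f z))"

definition F_lam :: "real \<Rightarrow> (complex \<Rightarrow> complex) \<Rightarrow> complex \<Rightarrow> complex" where
  "F_lam lam f z = (1 - of_real lam) * f z + of_real lam * z * deriv f z"

definition varsigma1 :: "nat \<Rightarrow> nat \<Rightarrow> real \<Rightarrow> real" where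
  "varsigma1 n p \<delta> =
     (if \<delta> \<le> 1 / (2 * real p) then - (real n * \<delta> * real p) / (2 * (1 - \<delta> * real p))
      else - (real n * (1 - \<delta> * real p)) / (2 * \<delta> * real p))"

end

theory Submission
  imports Defs
begin

lemma powser_sums_deriv:
  fixes c :: "nat \<Rightarrow> complex" and G :: "complex \<Rightarrow> complex"
  assumes "\<And>z. z \<in> ball 0 1 \<Longrightarrow> (\<lambda>k. c k * z ^ k) sums G z"
  shows "G holomorphic_on ball 0 1"
    and "\<And>z. z \<in> ball 0 1 \<Longrightarrow> (\<lambda>k. diffs c k * z ^ k) sums deriv G z"
proof -
  have summ: "\<And>z. norm z < 1 \<Longrightarrow> summable (\<lambda>k. c k * z ^ k)"
    using assms mem_ball_0 sums_summable by blast
  have eq: "\<And>z. z \<in> ball 0 1 \<Longrightarrow> (\<Sum>k. c k * z ^ k) = G z"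
    using assms sums_unique by metis
  have D: "(G has_field_derivative (\<Sum>k. diffs c k * z ^ k)) (at z)" if "z \<in> ball 0 1" for z
  proof (rule has_field_derivative_transform_within_open[OF termdiffs_strong'[where K=1], where S="ball 0 1"])
    show "\<And>z. norm z < 1 \<Longrightarrow> summable (\<lambda>k. c k * z ^ k)" by (rule summ)
    show "norm z < 1" using that by simp
  qed (use that eq in auto)
  show "G holomorphic_on ball 0 1"
    unfolding holomorphic_on_def field_differentiable_def
    using D has_field_derivative_at_within by blast
  fix z :: complex assume z: "z \<in> ball 0 1"
  have "deriv G z = (\<Sum>k. diffs c k * z ^ k)" using D[OF z] by (rule DERIV_imp_deriv)
  moreover have "summable (\<lambda>k. diffs c k * z ^ k)"
    by (rule termdiff_converges[where K=1]) (use z summ in auto)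
  ultimately show "(\<lambda>k. diffs c k * z ^ k) sums deriv G z"
    by (simp add: summable_sums)
qed

lemma sums_shift_powser:
  fixes b :: "nat \<Rightarrow> complex"
  assumes "(\<lambda>k. b k * z ^ k) sums s" "\<And>k. k < m \<Longrightarrow> b k = 0"
  shows "(\<lambda>k. b (k + m) * z ^ k) sums (\<Sum>k. b (k + m) * z ^ k)"
    and "s = z ^ m * (\<Sum>k. b (k + m) * z ^ k)"
proof -
  have "\<exists>t. (\<lambda>k. b (k + m) * z ^ k) sums t \<and> s = z ^ m * t"
  proof (cases "z = 0")
    case True
    have s: "s = b 0" using assms(1) powser_sums_zero[of b] True sums_unique2 by blast
    show ?thesis
    proof (cases "m = 0")
      case True thus ?thesis using s powser_sums_zero[of b] \<open>z = 0\<close> by auto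
    next
      case False thus ?thesis using s assms(2)[of 0] powser_sums_zero[of "\<lambda>k. b (k+m)"] \<open>z = 0\<close>
        by auto
    qed
  next
    case False
    have "(\<lambda>k. b (k + m) * z ^ (k + m)) sums s"
      using sums_zero_iff_shift[of m "\<lambda>k. b k * z ^ k" s] assms by simp
    hence "(\<lambda>k. b (k + m) * z ^ (k + m) * (1 / z ^ m)) sums (s * (1 / z ^ m))"
      by (rule sums_mult2)
    moreover have "\<And>k. b (k + m) * z ^ (k + m) * (1 / z ^ m) = b (k + m) * z ^ k"
      using False by (simp add: power_add)
    ultimately show ?thesis using False by (intro exI[of _ "s / z ^ m"]) auto
  qed
  then obtain t where t: "(\<lambda>k. b (k + m) * z ^ k) sums t" "s = z ^ m * t" by blast
  thus "(\<lambda>k. b (k + m) * z ^ k) sums (\<Sum>k. b (k + m) * z ^ k)"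
    using sums_unique by (metis sums_summable summable_sums)
  show "s = z ^ m * (\<Sum>k. b (k + m) * z ^ k)" using t sums_unique by metis
qed

lemma vec_deriv_Re:
  assumes "(h has_vector_derivative D) (at x)"
  shows "((\<lambda>t. Re (h t)) has_real_derivative Re D) (at x)"
proof -
  have "((\<lambda>t. Re (h t)) has_derivative (\<lambda>t. Re (t *\<^sub>R D))) (at x)"
    using bounded_linear.has_derivative[OF bounded_linear_Re assms[unfolded has_vector_derivative_def]] .
  moreover have "(\<lambda>t. Re (t *\<^sub>R D)) = (*) (Re D)" by (auto simp: mult.commute)
  ultimately show ?thesis by (simp add: has_field_derivative_def)
qed

lemma jack:
  fixes w v :: "complex \<Rightarrow> complex" and z0 :: complex
  assumes A: "open A" "cball 0 r \<subseteq> A" and r: "r > 0"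
    and hw: "w holomorphic_on A" and hv: "v holomorphic_on A"
    and wv: "\<And>z. z \<in> A \<Longrightarrow> w z = z ^ n * v z"
    and le1: "\<And>z. z \<in> cball 0 r \<Longrightarrow> norm (w z) \<le> 1"
    and z0: "norm z0 = r" and w0: "norm (w z0) = 1"
  shows "z0 * deriv w z0 / w z0 = of_real (Re (z0 * deriv w z0 / w z0))"
    and "Re (z0 * deriv w z0 / w z0) \<ge> real n"
proof -
  define W where "W = deriv w z0"
  define c where "c = cnj (w z0)"
  have z0A: "z0 \<in> A" using A z0 by auto
  have dw: "(w has_field_derivative W) (at x)" if "x = z0" for x
    unfolding W_def using holomorphic_derivI[OF hw A(1) z0A] that by simp
  have cw: "c * w z0 = 1"
  proof -
    have "w z0 * cnj (w z0) = 1" using complex_norm_square[of "w z0"] w0 by simp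
    thus ?thesis by (simp add: c_def mult.commute)
  qed
  have Qeq: "z0 * W / w z0 = c * z0 * W"
  proof -
    have "w z0 \<noteq> 0" using w0 by auto
    hence "c = 1 / w z0" using cw by (simp add: field_simps)
    thus ?thesis by simp
  qed
  define Q where "Q = c * z0 * W"
  have "((\<lambda>s. z0 * exp (\<i> * s)) has_field_derivative (z0 * (\<i> * exp (\<i> * 0)))) (at (of_real 0))"
    by (auto intro!: derivative_eq_intros)
  from DERIV_chain2[OF dw this] 
  have "((\<lambda>s. c * w (z0 * exp (\<i> * s))) has_field_derivative (c * (W * (z0 * (\<i> * exp (\<i> * 0)))))) (at (of_real 0))"
    by (intro DERIV_cmult) simp
  hence "((\<lambda>t. c * w (z0 * exp (\<i> * of_real t))) has_vector_derivative (c * (W * (z0 * (\<i> * exp (\<i> * 0)))))) (at 0)"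
    by (rule has_vector_derivative_real_field)
  hence d1: "((\<lambda>t. Re (c * w (z0 * exp (\<i> * of_real t)))) has_real_derivative Re (\<i> * Q)) (at 0)"
    unfolding Q_def by (rule vec_deriv_Re[THEN DERIV_cong]) (simp add: algebra_simps)
  have "Re (\<i> * Q) = 0"
  proof (rule DERIV_local_max[OF d1 zero_less_one], intro allI impI)
    fix y :: real
    have "norm (z0 * exp (\<i> * of_real y)) = r" using z0 by (simp add: norm_mult)
    hence "norm (w (z0 * exp (\<i> * of_real y))) \<le> 1" using le1 by simp
    hence "Re (c * w (z0 * exp (\<i> * of_real y))) \<le> 1"
      using complex_Re_le_cmod[of "c * w (z0 * exp (\<i> * of_real y))"] w0
      by (simp add: c_def norm_mult)
    thus "Re (c * w (z0 * exp (\<i> * of_real y))) \<le> Re (c * w (z0 * exp (\<i> * of_real 0)))"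
      using cw by simp
  qed
  hence ImQ: "Im Q = 0" by simp
  \<comment> \<open>Schwarz\<close>
  have vb: "norm (v z) \<le> 1 / r ^ n" if "z \<in> cball 0 r" for z
  proof (rule maximum_modulus_frontier[where S="cball 0 r" and f=v])
    show "v holomorphic_on interior (cball (0::complex) r)"
      by (rule holomorphic_on_subset[OF hv]) (use A(2) ball_subset_cball[of 0 r] in auto)
    show "continuous_on (closure (cball (0::complex) r)) v"
      using holomorphic_on_imp_continuous_on[OF hv] A by (auto intro: continuous_on_subset)
    fix u :: complex assume u: "u \<in> frontier (cball 0 r)"
    hence "norm u = r" using r by (simp add: frontier_cball)
    moreover have "norm (w u) \<le> 1" using le1 u r by (simp add: frontier_cball)
    moreover have "w u = u ^ n * v u" using wv u A r by (auto simp: frontier_cball)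
    ultimately have "r ^ n * norm (v u) \<le> 1" by (simp add: norm_mult norm_power)
    thus "norm (v u) \<le> 1 / r ^ n" using r by (simp add: field_simps)
  qed (use that in auto)
  have wt: "norm (w (of_real t * z0)) \<le> t ^ n" if "0 \<le> t" "t \<le> 1" for t
  proof -
    have m: "of_real t * z0 \<in> cball 0 r" using that z0 r by (simp add: norm_mult mult_left_le_one_le)
    hence "norm (w (of_real t * z0)) = (t * r) ^ n * norm (v (of_real t * z0))"
    proof -
      have "of_real t * z0 \<in> A" using m A(2) by blast
      hence "w (of_real t * z0) = (of_real t * z0) ^ n * v (of_real t * z0)" by (rule wv)
      thus ?thesis using that z0 by (simp add: norm_mult norm_power power_mult_distrib)
    qed
    also have "\<dots> \<le> (t * r) ^ n * (1 / r ^ n)"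
      using vb[OF m] that r by (intro mult_left_mono) auto
    also have "\<dots> = t ^ n" using r by (simp add: power_mult_distrib)
    finally show ?thesis .
  qed
  have "((\<lambda>s. s * z0) has_field_derivative (1 * z0)) (at (of_real 1))"
    by (auto intro!: derivative_eq_intros)
  from DERIV_chain2[OF dw this] 
  have "((\<lambda>s. c * w (s * z0)) has_field_derivative (c * (W * (1 * z0)))) (at (of_real 1))"
    by (intro DERIV_cmult) simp
  hence "((\<lambda>t. c * w (of_real t * z0)) has_vector_derivative (c * (W * (1 * z0)))) (at 1)"
    by (rule has_vector_derivative_real_field)
  hence "((\<lambda>t. Re (c * w (of_real t * z0))) has_real_derivative Re Q) (at 1)"
    unfolding Q_def by (rule vec_deriv_Re[THEN DERIV_cong]) (simp add: algebra_simps)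
  from DERIV_diff[OF this DERIV_pow[of n 1]]
  have d2: "((\<lambda>t. Re (c * w (of_real t * z0)) - t ^ n) has_real_derivative (Re Q - real n)) (at 1)"
    by simp
  have "Re Q \<ge> real n"
  proof (rule ccontr)
    assume "\<not> ?thesis"
    hence neg: "Re Q - real n < 0" by simp
    from DERIV_neg_dec_left[OF d2 neg] obtain e where e: "e > 0" "\<forall>h>0. h < e \<longrightarrow>
       (\<lambda>t. Re (c * w (of_real t * z0)) - t ^ n) 1 < (\<lambda>t. Re (c * w (of_real t * z0)) - t ^ n) (1 - h)"
      by blast
    define h where "h = min (e/2) (1/2)"
    have h: "h > 0" "h < e" "h \<le> 1/2" using e by (auto simp: h_def)
    have "Re (c * w (of_real (1 - h) * z0)) \<le> norm (w (of_real (1 - h) * z0))"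
      using complex_Re_le_cmod[of "c * w (of_real (1 - h) * z0)"] w0 by (simp add: c_def norm_mult)
    also have "\<dots> \<le> (1 - h) ^ n" using wt[of "1 - h"] h by simp
    finally have "Re (c * w (of_real (1 - h) * z0)) - (1 - h) ^ n \<le> 0" by simp
    moreover have "Re (c * w (of_real 1 * z0)) - 1 ^ n = 0" using cw by simp
    ultimately show False using e(2)[rule_format, OF h(1,2)] by simp
  qed
  show "z0 * deriv w z0 / w z0 = of_real (Re (z0 * deriv w z0 / w z0))"
    using ImQ Qeq unfolding W_def Q_def by (simp add: complex_eq_iff)
  show "Re (z0 * deriv w z0 / w z0) \<ge> real n"
    using \<open>Re Q \<ge> real n\<close> Qeq unfolding W_def Q_def by simp
qed

lemma final_ineq:
  fixes g0 :: complex and d m :: real and n :: nat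
  assumes gd: "Re g0 = d" and d: "0 \<le> d" "d < 1" and mn: "m \<ge> real n" and g0: "g0 \<noteq> 0"
  shows "Re (of_real m * (g0 - 1) * (g0 + 1 - 2 * of_real d) / ((2 - 2 * of_real d) * g0))
     \<le> (if d \<le> 1/2 then - (real n * d) / (2 * (1 - d)) else - (real n * (1 - d)) / (2 * d))"
proof -
  define y where "y = Im g0"
  define s where "s = d^2 + y^2"
  define X where "X = (1-d)^2 + y^2"
  have g0e: "g0 = Complex d y" using gd y_def by (simp add: complex_eq_iff)
  have s: "s > 0" using g0 g0e unfolding s_def
    by (metis add_nonneg_nonneg add_pos_nonneg complex.sel not_less_iff_gr_or_eq power2_less_0 sum_power2_gt_zero_iff zero_le_power2 zero_complex.code)
  have num: "of_real m * (g0 - 1) * (g0 + 1 - 2 * of_real d) = of_real (- m * X)"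
    unfolding g0e X_def by (simp add: complex_eq_iff algebra_simps power2_eq_square)
  have den: "(2 - 2 * of_real d) * g0 = Complex ((2 - 2*d) * d) ((2 - 2*d) * y)"
    unfolding g0e by (simp add: complex_eq_iff)
  have R: "Re (of_real m * (g0 - 1) * (g0 + 1 - 2 * of_real d) / ((2 - 2 * of_real d) * g0))
      = - (m * X * d) / (2 * (1 - d) * s)"
  proof -
    have "Re (of_real (- m * X) / Complex ((2 - 2*d) * d) ((2 - 2*d) * y))
       = (- m * X) * ((2 - 2*d) * d) / (((2 - 2*d) * d)^2 + ((2 - 2*d) * y)^2)"
      by (simp add: Re_divide cmod_power2)
    also have "\<dots> = - (m * X * d) / (2 * (1 - d) * s)"
    proof (subst frac_eq_eq)
      have "((2 - 2*d) * d)^2 + ((2 - 2*d) * y)^2 = (2 - 2*d)^2 * s"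
        unfolding s_def by (simp add: power2_eq_square algebra_simps)
      thus "((2 - 2*d) * d)^2 + ((2 - 2*d) * y)^2 \<noteq> 0" using d s by simp
      show "2 * (1 - d) * s \<noteq> 0" using d s by simp
      show "- m * X * ((2 - 2 * d) * d) * (2 * (1 - d) * s) =
            - (m * X * d) * (((2 - 2 * d) * d)\<^sup>2 + ((2 - 2 * d) * y)\<^sup>2)"
        unfolding \<open>((2 - 2*d) * d)^2 + ((2 - 2*d) * y)^2 = (2 - 2*d)^2 * s\<close>
        by (simp add: power2_eq_square algebra_simps)
    qed
    finally show ?thesis unfolding num den .
  qed
  have Xs: "X \<ge> s" if "d \<le> 1/2" using that d unfolding X_def s_def by (simp add: power2_eq_square algebra_simps)
  have n0: "real n \<ge> 0" by simp
  show ?thesis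
  proof (cases "d \<le> 1/2")
    case True
    have "real n * d * s \<le> m * X * d"
    proof -
      have "real n * s \<le> m * X" by (rule mult_mono[OF mn Xs[OF True]]) (use mn s in auto)
      from mult_right_mono[OF this d(1)] show ?thesis by (simp add: mult_ac)
    qed
    hence "real n * d * s / (2 * (1 - d) * s) \<le> m * X * d /(2 * (1 - d) * s)"
      by (rule divide_right_mono) (use d s in simp)
    moreover have "real n * d * s / (2 * (1 - d) * s) = real n * d / (2 * (1 - d))" using s by simp
    ultimately show ?thesis unfolding R using True by simp
  next
    case False
    have "real n * ((1-d)^2 * s) \<le> m * (X * d^2)"
    proof (rule mult_mono[OF mn])
      have "(1-d)^2 \<le> d^2" using False d by (simp add: power2_eq_square algebra_simps)
      hence h: "0 \<le> y^2 * (d^2 - (1-d)^2)" by simp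
      have "X * d^2 - (1-d)^2 * s = y^2 * (d^2 - (1-d)^2)"
        unfolding X_def s_def by (simp add: algebra_simps)
      thus "(1-d)^2 * s \<le> X * d^2" using h by linarith
      show "0 \<le> m" using mn by (meson of_nat_0_le_iff order_trans)
      show "0 \<le> (1-d)^2 * s" using s by simp
    qed
    hence "real n * ((1-d)^2 * s) / (2 * (1 - d) * s * d) \<le> m * (X * d^2) / (2 * (1 - d) * s * d)"
      by (rule divide_right_mono) (use d s False in simp)
    moreover have "real n * ((1-d)^2 * s) / (2 * (1 - d) * s * d) = real n * (1 - d) / (2 * d)"
    proof -
      have "d \<noteq> 0" "1 - d \<noteq> 0" "s \<noteq> 0" using s d False by auto
      thus ?thesis by (simp add: power2_eq_square field_simps)
    qed
    moreover have "m * (X * d^2) / (2 * (1 - d) * s * d) = m * X * d / (2 * (1 - d) * s)"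
      using s d False by (simp add: power2_eq_square)
    ultimately show ?thesis unfolding R using False by simp
  qed
qed

lemma diffs_shift_sums:
  fixes c :: "nat \<Rightarrow> complex"
  assumes "(\<lambda>k. diffs c k * z ^ k) sums D"
  shows "(\<lambda>k. of_nat k * c k * z ^ k) sums (z * D)"
proof -
  have "(\<lambda>k. diffs c k * z ^ k * z) sums (D * z)" by (rule sums_mult2[OF assms])
  hence "(\<lambda>k. of_nat (k + 1) * c (k + 1) * z ^ (k + 1)) sums (z * D)"
    by (simp add: diffs_def mult_ac)
  thus ?thesis using sums_zero_iff_shift[of 1 "\<lambda>k. of_nat k * c k * z ^ k"] by simp
qed

lemma norm_w_le:
  fixes x :: complex and d :: real
  assumes "Re x \<ge> d" "d < 1"
  shows "norm (x - 1) \<le> norm (x + 1 - 2 * of_real d)"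
proof -
  have "(Re x - 1)^2 + (Im x)^2 \<le> (Re x + 1 - 2 * d)^2 + (Im x)^2"
  proof -
    have "(Re x + 1 - 2 * d)^2 - (Re x - 1)^2 = (2 * Re x - 2 * d) * (2 - 2 * d)"
      by (simp add: power2_eq_square algebra_simps)
    moreover have "(2 * Re x - 2 * d) * (2 - 2 * d) \<ge> 0" using assms by simp
    ultimately show ?thesis by linarith
  qed
  thus ?thesis unfolding cmod_def by (simp add: real_sqrt_le_mono)
qed

lemma norm_w_eq:
  fixes x :: complex and d :: real
  assumes "Re x = d"
  shows "norm (x - 1) = norm (x + 1 - 2 * of_real d)"
proof -
  have "(Re x - 1)^2 = (Re x + 1 - 2 * d)^2"
    using assms by (simp add: power2_eq_square algebra_simps)
  thus ?thesis unfolding cmod_def by simp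
qed

theorem corollary3p14:
  fixes n p :: nat and lam \<delta> :: real and f :: "complex \<Rightarrow> complex"
  assumes "n \<ge> 1" and "p \<ge> 1"
    and "0 \<le> lam" and "lam \<le> 1"
    and "of_form p n f"
    and "\<forall>z\<in>unit_disc - {0}. F_lam lam f z * deriv (F_lam lam f) z \<noteq> 0"
    and "0 \<le> \<delta>" and "\<delta> < 1 / real p"
    and "\<forall>z\<in>unit_disc - {0}.
           Re (z * deriv (F_lam lam f) z / F_lam lam f z - 1
               - z * deriv (deriv (F_lam lam f)) z / deriv (F_lam lam f) z) > varsigma1 n p \<delta>"
  shows "\<forall>z\<in>unit_disc - {0}. Re (F_lam lam f z / (z * deriv (F_lam lam f) z)) > \<delta>"
proof -
  define F where "F = F_lam lam f"
  have B: "unit_disc = ball 0 1" by (simp add: unit_disc_def)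
  have FF: "\<And>z. z \<in> ball 0 1 - {0} \<Longrightarrow> F z \<noteq> 0 \<and> deriv F z \<noteq> 0"
    using assms(6) unfolding F_def B by auto
  have hyp: "\<And>z. z \<in> ball 0 1 - {0} \<Longrightarrow> Re (z * deriv F z / F z - 1
               - z * deriv (deriv F) z / deriv F z) > varsigma1 n p \<delta>"
    using assms(9) unfolding F_def B by auto
  obtain a where a1: "a p = 1" and a0: "\<And>k. k < p + n \<Longrightarrow> k \<noteq> p \<Longrightarrow> a k = 0"
    and asum: "\<And>z. z \<in> ball 0 1 \<Longrightarrow> (\<lambda>k. a k * z ^ k) sums f z"
    using assms(5) unfolding of_form_def B by blast
  have fd: "\<And>z. z \<in> ball 0 1 \<Longrightarrow> (\<lambda>k. diffs a k * z ^ k) sums deriv f z"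
    using powser_sums_deriv(2)[OF asum] by blast
  define c where "c k = (1 - of_real lam + of_real lam * of_nat k) * a k" for k
  have Fsum: "(\<lambda>k. c k * z ^ k) sums F z" if "z \<in> ball 0 1" for z
  proof -
    have s1: "(\<lambda>k. of_nat k * a k * z ^ k) sums (z * deriv f z)"
      by (rule diffs_shift_sums[OF fd[OF that]])
    have "(\<lambda>k. (1 - of_real lam) * (a k * z ^ k) + of_real lam * (of_nat k * a k * z ^ k)) sums
          ((1 - of_real lam) * f z + of_real lam * (z * deriv f z))"
      by (intro sums_add sums_mult asum that s1)
    thus ?thesis by (simp add: F_def F_lam_def c_def algebra_simps)
  qed
  have c0: "\<And>k. k < p + n \<Longrightarrow> k \<noteq> p \<Longrightarrow> c k = 0" using a0 by (simp add: c_def)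
  have cp: "c p = of_real (1 - lam + lam * real p)" using a1 by (simp add: c_def)
  have cpge: "1 - lam + lam * real p \<ge> 1"
  proof -
    have "lam * 1 \<le> lam * real p" using assms(2,3) by (intro mult_left_mono) auto
    thus ?thesis by simp
  qed
  have cpnz: "c p \<noteq> 0" using cp cpge by (metis of_real_eq_0_iff not_one_le_zero)
  have Fh: "F holomorphic_on ball 0 1" by (rule powser_sums_deriv(1)[OF Fsum])
  have F'sum: "\<And>z. z \<in> ball 0 1 \<Longrightarrow> (\<lambda>k. diffs c k * z ^ k) sums deriv F z"
    using powser_sums_deriv(2)[OF Fsum] by blast
  have F'h: "deriv F holomorphic_on ball 0 1" by (rule powser_sums_deriv(1)[OF F'sum])
  define H where "H z = (\<Sum>k. c (k + p) * z ^ k)" for z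
  define K where "K z = (\<Sum>k. of_nat (k + p) * c (k + p) * z ^ k)" for z
  have cl: "\<And>k. k < p \<Longrightarrow> c k = 0" using c0 by simp
  have Hsum: "\<And>z. z \<in> ball 0 1 \<Longrightarrow> (\<lambda>k. c (k + p) * z ^ k) sums H z"
    unfolding H_def using sums_shift_powser(1)[OF Fsum cl] by blast
  have Feq: "\<And>z. z \<in> ball 0 1 \<Longrightarrow> F z = z ^ p * H z"
    unfolding H_def using sums_shift_powser(2)[OF Fsum cl] by blast
  have Ksum0: "\<And>z. z \<in> ball 0 1 \<Longrightarrow> (\<lambda>k. (of_nat k * c k) * z ^ k) sums (z * deriv F z)"
    using diffs_shift_sums[OF F'sum] by (simp add: mult.assoc)
  have cl2: "\<And>k. k < p \<Longrightarrow> of_nat k * c k = 0" using cl by simp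
  have Ksum: "\<And>z. z \<in> ball 0 1 \<Longrightarrow> (\<lambda>k. of_nat (k + p) * c (k + p) * z ^ k) sums K z"
    unfolding K_def using sums_shift_powser(1)[OF Ksum0 cl2] by blast
  have Keq: "\<And>z. z \<in> ball 0 1 \<Longrightarrow> z * deriv F z = z ^ p * K z"
    unfolding K_def using sums_shift_powser(2)[OF Ksum0 cl2] by blast
  define e where "e k = of_nat p * c (k + p) - of_nat (k + p) * c (k + p)" for k
  define E where "E z = (\<Sum>k. e (k + n) * z ^ k)" for z
  have esum: "(\<lambda>k. e k * z ^ k) sums (of_nat p * H z - K z)" if "z \<in> ball 0 1" for z
  proof -
    have "(\<lambda>k. of_nat p * (c (k + p) * z ^ k) - of_nat (k + p) * c (k + p) * z ^ k) sums (of_nat p * H z - K z)"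
      by (intro sums_diff sums_mult Hsum Ksum that)
    thus ?thesis by (simp add: e_def algebra_simps)
  qed
  have el: "\<And>k. k < n \<Longrightarrow> e k = 0"
  proof -
    fix k assume k: "k < n"
    show "e k = 0"
    proof (cases "k = 0")
      case True thus ?thesis by (simp add: e_def)
    next
      case False thus ?thesis using c0[of "k + p"] k by (simp add: e_def)
    qed
  qed
  have Esum: "\<And>z. z \<in> ball 0 1 \<Longrightarrow> (\<lambda>k. e (k + n) * z ^ k) sums E z"
    unfolding E_def using sums_shift_powser(1)[OF esum el] by blast
  have Eeq: "\<And>z. z \<in> ball 0 1 \<Longrightarrow> of_nat p * H z - K z = z ^ n * E z"
    unfolding E_def using sums_shift_powser(2)[OF esum el] by blast
  have Hh: "H holomorphic_on ball 0 1" by (rule powser_sums_deriv(1)[OF Hsum])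
  have Kh: "K holomorphic_on ball 0 1" by (rule powser_sums_deriv(1)[OF Ksum])
  have Eh: "E holomorphic_on ball 0 1" by (rule powser_sums_deriv(1)[OF Esum])
  have H0: "H 0 = c p"
    using sums_unique2[OF Hsum[of 0] powser_sums_zero[of "\<lambda>k. c (k + p)"]] by simp
  have K0: "K 0 = of_nat p * c p"
    using sums_unique2[OF Ksum[of 0] powser_sums_zero[of "\<lambda>k. of_nat (k + p) * c (k + p)"]] by simp
  have pnz: "(of_nat p :: complex) \<noteq> 0" using assms(2) by simp
  have Knz: "K z \<noteq> 0" if "z \<in> ball 0 1" for z
  proof (cases "z = 0")
    case True thus ?thesis using K0 pnz cpnz by simp
  next
    case False
    hence "z * deriv F z \<noteq> 0" using FF that by auto
    thus ?thesis using Keq[OF that] by auto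
  qed
  define g where "g z = of_nat p * H z / K z" for z
  have gh: "g holomorphic_on ball 0 1"
    unfolding g_def[abs_def] using Hh Kh Knz by (auto intro!: holomorphic_intros)
  have gc: "continuous_on (ball 0 1) g" using gh by (rule holomorphic_on_imp_continuous_on)
  have g0: "g 0 = 1" using H0 K0 pnz cpnz by (simp add: g_def)
  have geq: "g z = of_nat p * F z / (z * deriv F z)" if "z \<in> ball 0 1 - {0}" for z
  proof -
    have "z ^ p \<noteq> 0" using that by auto
    thus ?thesis using Feq[of z] Keq[of z] that by (simp add: g_def)
  qed
  have gnz: "g z \<noteq> 0" if "z \<in> ball 0 1 - {0}" for z
    using geq[OF that] FF[OF that] that pnz by simp
  have gm1: "g z - 1 = z ^ n * (E z / K z)" if "z \<in> ball 0 1" for z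
  proof -
    have "g z - 1 = (of_nat p * H z - K z) / K z" using Knz[OF that] by (simp add: g_def field_simps)
    thus ?thesis using Eeq[OF that] by simp
  qed
  have hypg: "Re (z * deriv g z / g z) > varsigma1 n p \<delta>" if z: "z \<in> ball 0 1 - {0}" for z
  proof -
    define a0 a1 a2 where "a0 = F z" and "a1 = deriv F z" and "a2 = deriv (deriv F) z"
    have nz: "a0 \<noteq> 0" "a1 \<noteq> 0" "z \<noteq> 0" using FF[OF z] z by (auto simp: a0_def a1_def)
    have dF: "(F has_field_derivative a1) (at z)"
      unfolding a1_def using holomorphic_derivI[OF Fh open_ball] z by auto
    have dF': "(deriv F has_field_derivative a2) (at z)"
      unfolding a2_def using holomorphic_derivI[OF F'h open_ball] z by auto
    have dz: "((\<lambda>x. x * deriv F x) has_field_derivative (1 * a1 + z * a2)) (at z)"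
      using DERIV_mult[OF DERIV_ident dF'] unfolding a1_def by (simp add: mult.commute)
    have "((\<lambda>x. of_nat p * F x / (x * deriv F x)) has_field_derivative
           of_nat p * ((a1 * (z * a1) - a0 * (1 * a1 + z * a2)) / ((z * a1) * (z * a1)))) (at z)"
      using DERIV_cmult[OF DERIV_divide[OF dF dz], of "of_nat p"] nz
      unfolding a0_def a1_def by (simp add: times_divide_eq_right)
    hence "(g has_field_derivative
           of_nat p * ((a1 * (z * a1) - a0 * (1 * a1 + z * a2)) / ((z * a1) * (z * a1)))) (at z)"
      by (rule has_field_derivative_transform_within_open[where S="ball 0 1 - {0}"])
         (use z geq in auto)
    hence dg: "deriv g z = of_nat p * ((a1 * (z * a1) - a0 * (1 * a1 + z * a2)) / ((z * a1) * (z * a1)))"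
      by (rule DERIV_imp_deriv)
    have "z * deriv g z / g z = z * a1 / a0 - 1 - z * a2 / a1"
      unfolding dg geq[OF z] using nz pnz unfolding a0_def[symmetric] a1_def[symmetric]
      by (simp add: field_simps)
    thus ?thesis using hyp[OF z] unfolding a0_def a1_def a2_def by simp
  qed
  define d where "d = \<delta> * real p"
  have pr: "real p > 0" using assms(2) by simp
  have d0: "0 \<le> d" using assms(7) pr by (simp add: d_def)
  have d1: "d < 1" using assms(8) pr by (simp add: d_def field_simps)
  have vs: "varsigma1 n p \<delta> = (if d \<le> 1/2 then - (real n * d) / (2 * (1 - d)) else - (real n * (1 - d)) / (2 * d))"
  proof -
    have "(\<delta> \<le> 1 / (2 * real p)) = (d \<le> 1/2)" using pr by (simp add: d_def field_simps)
    thus ?thesis unfolding varsigma1_def d_def by (simp add: mult.assoc)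
  qed
  have main: "Re (g z) > d" if z: "z \<in> ball 0 1 - {0}" for z
  proof (rule ccontr)
    assume "\<not> ?thesis"
    hence z1le: "Re (g z) \<le> d" by simp
    define S where "S = cball 0 (norm z) \<inter> g -` {w. Re w \<le> d}"
    have zb: "norm z < 1" using z by simp
    have cbsub: "cball 0 (norm z) \<subseteq> ball 0 1" using zb by auto
    have "closed S" unfolding S_def
      by (rule continuous_closed_preimage[OF continuous_on_subset[OF gc cbsub] closed_cball closed_halfspace_Re_le])
    hence cS: "compact S" unfolding S_def
      by (metis bounded_Int bounded_cball compact_eq_bounded_closed S_def)
    have zS: "z \<in> S" using z1le by (simp add: S_def)
    have "compact (norm ` S)" by (rule compact_continuous_image[OF continuous_on_norm_id cS])
    moreover have "norm ` S \<noteq> {}" using zS by auto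
    ultimately obtain r where rS: "r \<in> norm ` S" and rmin: "\<And>t. t \<in> norm ` S \<Longrightarrow> r \<le> t"
      using compact_attains_inf by meson
    then obtain z0 where z0S: "z0 \<in> S" and z0r: "norm z0 = r" by auto
    have rz: "r \<le> norm z" using z0S z0r by (simp add: S_def)
    have z0nz: "z0 \<noteq> 0" using z0S g0 d1 by (auto simp: S_def)
    have r0: "r > 0" using z0nz z0r by auto
    have r1: "r < 1" using rz zb by simp
    have crsub: "cball 0 r \<subseteq> ball 0 1" using r1 by auto
    have inball: "Re (g u) > d" if "u \<in> ball 0 r" for u
    proof (rule ccontr)
      assume "\<not> ?thesis"
      hence "u \<in> S" using that rz by (simp add: S_def)
      hence "r \<le> norm u" using rmin by auto
      thus False using that by simp
    qed
    define C where "C = cball 0 r \<inter> g -` {w. d \<le> Re w}"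
    have "closed C" unfolding C_def
      by (rule continuous_closed_preimage[OF continuous_on_subset[OF gc crsub] closed_cball closed_halfspace_Re_ge])
    moreover have "ball 0 r \<subseteq> C" using inball by (auto simp: C_def less_imp_le)
    ultimately have "closure (ball 0 r) \<subseteq> C" by (rule closure_minimal[rotated])
    hence incb: "\<And>u. u \<in> cball 0 r \<Longrightarrow> d \<le> Re (g u)" using r0 by (auto simp: C_def)
    have z0d: "Re (g z0) = d" using incb[of z0] z0r z0S by (simp add: S_def)
    define A where "A = ball 0 1 \<inter> g -` {w. Re w > 2 * d - 1}"
    have oA: "open A" unfolding A_def
      by (rule continuous_open_preimage[OF gc open_ball open_halfspace_Re_gt])
    have AsubB: "A \<subseteq> ball 0 1" by (auto simp: A_def)
    have cA: "cball 0 r \<subseteq> A"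
    proof
      fix u :: complex assume u: "u \<in> cball 0 r"
      have "2 * d - 1 < Re (g u)" using incb[OF u] d1 by linarith
      thus "u \<in> A" using u r1 by (auto simp: A_def)
    qed
    have dnz: "g u + 1 - 2 * of_real d \<noteq> 0" if "u \<in> A" for u
    proof
      assume "g u + 1 - 2 * of_real d = 0"
      hence "Re (g u + 1 - 2 * of_real d) = 0" by simp
      thus False using that by (simp add: A_def)
    qed
    define w where "w u = (g u - 1) / (g u + 1 - 2 * of_real d)" for u
    define v where "v u = (E u / K u) / (g u + 1 - 2 * of_real d)" for u
    have ghA: "g holomorphic_on A" using gh AsubB by (rule holomorphic_on_subset)
    have hw: "w holomorphic_on A"
      unfolding w_def[abs_def] using ghA dnz by (auto intro!: holomorphic_intros)
    have hv: "v holomorphic_on A"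
      unfolding v_def[abs_def] using ghA dnz Knz AsubB
        holomorphic_on_subset[OF Eh AsubB] holomorphic_on_subset[OF Kh AsubB]
      by (auto intro!: holomorphic_intros)
    have wv: "w u = u ^ n * v u" if "u \<in> A" for u
      using gm1[of u] that AsubB by (auto simp: w_def v_def)
    have le1: "norm (w u) \<le> 1" if "u \<in> cball 0 r" for u
    proof -
      have "norm (g u - 1) \<le> norm (g u + 1 - 2 * of_real d)" by (rule norm_w_le[OF incb[OF that] d1])
      moreover have "g u + 1 - 2 * of_real d \<noteq> 0" using dnz cA that by auto
      ultimately show ?thesis by (simp add: w_def norm_divide divide_le_eq_1)
    qed
    have w0: "norm (w z0) = 1"
    proof -
      have "norm (g z0 - 1) = norm (g z0 + 1 - 2 * of_real d)" by (rule norm_w_eq[OF z0d])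
      moreover have "g z0 + 1 - 2 * of_real d \<noteq> 0" using dnz cA z0r by auto
      ultimately show ?thesis by (simp add: w_def norm_divide)
    qed
    note J = jack[OF oA cA r0 hw hv wv le1 z0r w0]
    define m where "m = Re (z0 * deriv w z0 / w z0)"
    have Jm: "z0 * deriv w z0 / w z0 = of_real m" using J(1) by (simp add: m_def)
    have mn: "m \<ge> real n" using J(2) by (simp add: m_def)
    define g0 G' where "g0 = g z0" and "G' = deriv g z0"
    have z0A: "z0 \<in> A" using cA z0r by auto
    have z0B: "z0 \<in> ball 0 1 - {0}" using z0A AsubB z0nz by auto
    have dg: "(g has_field_derivative G') (at z0)"
      unfolding G'_def using holomorphic_derivI[OF gh open_ball] z0B by auto
    have den: "g0 + 1 - 2 * of_real d \<noteq> 0" using dnz z0A by (simp add: g0_def)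
    have "(w has_field_derivative ((G' * (g0 + 1 - 2 * of_real d) - (g0 - 1) * G') /
             ((g0 + 1 - 2 * of_real d) * (g0 + 1 - 2 * of_real d)))) (at z0)"
      unfolding w_def[abs_def] g0_def
      using DERIV_divide[OF DERIV_diff[OF dg DERIV_const] DERIV_diff[OF DERIV_add[OF dg DERIV_const] DERIV_const]] den
      unfolding g0_def by simp
    hence dw: "deriv w z0 = (G' * (g0 + 1 - 2 * of_real d) - (g0 - 1) * G') /
             ((g0 + 1 - 2 * of_real d) * (g0 + 1 - 2 * of_real d))"
      by (rule DERIV_imp_deriv)
    have w0e: "w z0 = (g0 - 1) / (g0 + 1 - 2 * of_real d)" by (simp add: w_def g0_def)
    have w0nz: "w z0 \<noteq> 0" using w0 by auto
    have g0nz: "g0 \<noteq> 0" using gnz z0B by (simp add: g0_def)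
    have dd: "2 - 2 * (of_real d :: complex) \<noteq> 0"
    proof
      assume "2 - 2 * (of_real d :: complex) = 0"
      hence "Re (2 - 2 * (of_real d :: complex)) = 0" by simp
      thus False using d1 by simp
    qed
    have "z0 * deriv w z0 = of_real m * w z0" using Jm w0nz by (simp add: field_simps)
    then have "z0 * G' / g0 = of_real m * (g0 - 1) * (g0 + 1 - 2 * of_real d) / ((2 - 2 * of_real d) * g0)"
    proof -
      define D where "D = g0 + 1 - 2 * of_real d"
      define k where "k = 2 - 2 * (of_real d :: complex)"
      have kD: "G' * D - (g0 - 1) * G' = G' * k" by (simp add: D_def k_def algebra_simps)
      assume h: "z0 * deriv w z0 = of_real m * w z0"
      have Dnz: "D \<noteq> 0" using den by (simp add: D_def)
      have knz: "k \<noteq> 0" using dd by (simp add: k_def)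
      have "z0 * (G' * k / (D * D)) = of_real m * ((g0 - 1) / D)"
        using h unfolding dw w0e D_def[symmetric] kD .
      hence e1: "z0 * (G' * k / (D * D)) * (D * D) = of_real m * ((g0 - 1) / D) * (D * D)" by simp
      have l: "z0 * (G' * k / (D * D)) * (D * D) = z0 * G' * k" using Dnz by simp
      have r: "of_real m * ((g0 - 1) / D) * (D * D) = of_real m * (g0 - 1) * D" using Dnz by simp
      have "z0 * G' * k = of_real m * (g0 - 1) * D" using e1 unfolding l r .
      hence "z0 * G' = of_real m * (g0 - 1) * D / k" using knz by (simp add: field_simps)
      hence "z0 * G' / g0 = (of_real m * (g0 - 1) * D / k) / g0" by simp
      thus ?thesis unfolding D_def k_def by (simp add: divide_divide_eq_left mult.commute)
    qed
    hence "Re (z0 * G' / g0) \<le> varsigma1 n p \<delta>"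
      using final_ineq[OF _ d0 d1 mn g0nz] z0d vs by (simp add: g0_def)
    moreover have "Re (z0 * G' / g0) > varsigma1 n p \<delta>" using hypg[OF z0B] by (simp add: g0_def G'_def)
    ultimately show False by simp
  qed
  show ?thesis
  proof
    fix z assume z: "z \<in> unit_disc - {0}"
    hence zb: "z \<in> ball 0 1 - {0}" by (simp add: B)
    have "Re (g z) = real p * Re (F z / (z * deriv F z))"
    proof -
      define Q where "Q = F z / (z * deriv F z)"
      have "g z = of_nat p * Q" using geq[OF zb] unfolding Q_def by (simp add: times_divide_eq_right)
      thus ?thesis unfolding Q_def[symmetric] by simp
    qed
    hence "real p * \<delta> < real p * Re (F z / (z * deriv F z))" using main[OF zb] by (simp add: d_def mult.commute)
    hence "\<delta> < Re (F z / (z * deriv F z))" using pr by simp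
    thus "\<delta> < Re (F_lam lam f z / (z * deriv (F_lam lam f) z))" by (simp add: F_def)
  qed
qed


end
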